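(* Let f1 and f2 be two point agents in the plane, each moving with a constant nonzero velocity, such that their straight-line trajectories are not parallel and hence intersect in a single point $P$. Let $t_1$ and $t_2$ be the times at which f1 and f2 respectively pass through $P$, and suppose $t_1>t_2$ (f1 reaches the intersection after f2). Then: (i) as observed by f1, agent f2 is in regressive motion at all times $t<t_2$ and in progressive motion at all times $t>t_2$; (ii) as observed by f2, agent f1 is in progressive motion at all times $t<t_1$ and in regressive motion at all times $t>t_1$.
   Context: Each agent is a point (center of projection) with a heading equal to the direction of its velocity. For an observer agent A and an observed agent B, let $\phi_{BA}(t)\in[-\pi,\pi)$ be the azimuthal position of B as seen from A, measured relative to A's heading: $\phi=0$ is straight ahead of A, positive angles are to A's left (counterclockwise) and negative angles to A's right. Let $\dot\phi_{BA}$ be its time derivative. B is said to be in regressive motion with respect to A at time $t$ if $\dot\phi_{BA}(t)\cdot\phi_{BA}(t)\le 0$, and in progressive motion otherwise. *)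

theory Defs
  imports "HOL-Complex_Analysis.Complex_Analysis"
begin

text \<open>The plane is modelled as the complex numbers.  An agent moving with constant
velocity v, located at c at time 0, has position traj c v t = c + t v.\<close>

definition traj :: "complex \<Rightarrow> complex \<Rightarrow> real \<Rightarrow> complex" where
  "traj c v t = c + of_real t * v"

text \<open>Azimuth of a displacement d relative to a heading direction h, in [-pi, pi):
0 = straight ahead, positive = counterclockwise (to the left).  Isabelle's Arg takes
values in (-pi, pi], so the value pi is mapped to -pi.\<close>

definition azimuth :: "complex \<Rightarrow> complex \<Rightarrow> real" where
  "azimuth h d = (let a = Arg (d / h) in if a = pi then - pi else a)"

definition phi_obs :: "(real \<Rightarrow> complex) \<Rightarrow> complex \<Rightarrow> (real \<Rightarrow> complex) \<Rightarrow> real \<Rightarrow> real" where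
  "phi_obs pA vA pB t = azimuth vA (pB t - pA t)"

definition regressive :: "(real \<Rightarrow> real) \<Rightarrow> real \<Rightarrow> bool" where
  "regressive phi t \<longleftrightarrow> phi differentiable (at t) \<and> deriv phi t * phi t \<le> 0"

definition progressive :: "(real \<Rightarrow> real) \<Rightarrow> real \<Rightarrow> bool" where
  "progressive phi t \<longleftrightarrow> phi differentiable (at t) \<and> deriv phi t * phi t > 0"

end

theory Submission
  imports Defs
begin

lemma key:
  fixes w :: complex and r s t :: real
  assumes b: "Im w \<noteq> 0" and ts: "t \<noteq> s"
  defines "z \<equiv> (\<lambda>t::real. of_real t * (w - 1) + (of_real r - of_real s * w))"
  defines "A \<equiv> (\<lambda>t. let a = Arg (z t) in if a = pi then - pi else a)"
  shows "A differentiable (at t)"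
    and "(t - s) * (r - s) > 0 \<Longrightarrow> deriv A t * A t > 0"
    and "(t - s) * (r - s) < 0 \<Longrightarrow> deriv A t * A t < 0"
proof -
  have Imz: "Im (z u) = (u - s) * Im w" for u
    by (simp add: z_def algebra_simps)
  have Rez: "Re (z u) = (u - s) * Re w - (u - r)" for u
    by (simp add: z_def algebra_simps)
  have nr: "z u \<notin> \<real>\<^sub>\<le>\<^sub>0" "z u \<noteq> 0" "A u = Im (Ln (z u))" if "u \<noteq> s" for u
  proof -
    have "Im (z u) \<noteq> 0" using Imz b that by simp
    then show 1: "z u \<notin> \<real>\<^sub>\<le>\<^sub>0" "z u \<noteq> 0"
      by (auto simp: complex_nonpos_Reals_iff)
    have "Arg (z u) \<noteq> pi" using \<open>Im (z u) \<noteq> 0\<close> by (simp add: Arg_eq_pi)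
    then show "A u = Im (Ln (z u))" using 1 by (simp add: A_def Arg_eq_Im_Ln)
  qed
  have ev: "eventually (\<lambda>u. A u = Im (Ln (z u))) (nhds t)"
  proof -
    have "eventually (\<lambda>u. u \<noteq> s) (nhds t)"
      using ts by (simp add: eventually_nhds_metric) (metis dist_commute dist_pos_lt less_irrefl)
    then show ?thesis by eventually_elim (use nr in auto)
  qed
  define D where "D = Im ((w - 1) * inverse (z t))"
  have zd: "(z has_vector_derivative (w - 1)) (at t)"
    unfolding z_def by (auto intro!: derivative_eq_intros)
  have "((Ln \<circ> z) has_vector_derivative ((w - 1) * inverse (z t))) (at t)"
    by (rule field_vector_diff_chain_at[OF zd has_field_derivative_Ln[OF nr(1)[OF ts]]])
  hence "((\<lambda>u. Im ((Ln \<circ> z) u)) has_field_derivative D) (at t)"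
    unfolding D_def by (rule has_field_derivative_Im)
  hence dA: "(A has_field_derivative D) (at t)"
    using DERIV_cong_ev[OF refl ev refl] by (simp add: o_def)
  show "A differentiable (at t)" using dA real_differentiable_def by blast
  have dd: "deriv A t = D" using dA by (rule DERIV_imp_deriv)
  have Ddef: "D = Im w * (r - s) / (cmod (z t))\<^sup>2"
  proof -
    have "D = Im ((w - 1) * cnj (z t)) / (cmod (z t))\<^sup>2"
      unfolding D_def by (simp add: inverse_eq_divide complex_div_cnj[of 1] Im_divide power2_eq_square)
    also have "Im ((w - 1) * cnj (z t)) = Im w * (r - s)"
      by (simp add: Imz Rez algebra_simps)
    finally show ?thesis .
  qed
  have At: "A t = Arg (z t)" using nr(3)[OF ts] nr(2)[OF ts] by (simp add: Arg_eq_Im_Ln)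
  have n2: "(cmod (z t))\<^sup>2 > 0" using nr(2)[OF ts] by simp
  have Imt: "Im (z t) \<noteq> 0" using Imz[of t] ts b by simp
  have sgnA: "(A t > 0 \<longleftrightarrow> (t - s) * Im w > 0) \<and> (A t < 0 \<longleftrightarrow> (t - s) * Im w < 0)"
    unfolding At Arg_neg_iff Arg_pos_iff Imz[symmetric] using Imt by simp
  have prod: "deriv A t * A t = ((Im w * (r - s)) * A t) / (cmod (z t))\<^sup>2"
    by (simp add: dd Ddef)
  have q: "A t * ((t - s) * Im w) > 0"
  proof -
    have "(t - s) * Im w \<noteq> 0" using ts b by simp
    then show ?thesis using sgnA
      by (cases "(t - s) * Im w > 0") (auto simp: mult_pos_pos mult_neg_neg)
  qed
  have eq: "((Im w * (r - s)) * A t) * (t - s)^2 = (A t * ((t - s) * Im w)) * ((t - s) * (r - s))"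
    by (simp add: power2_eq_square algebra_simps)
  have ts2: "(t - s)^2 > 0" using ts by simp
  show "(t - s) * (r - s) > 0 \<Longrightarrow> deriv A t * A t > 0"
  proof -
    assume h: "(t - s) * (r - s) > 0"
    have "((Im w * (r - s)) * A t) * (t - s)^2 > 0" unfolding eq using q h by simp
    then have "(Im w * (r - s)) * A t > 0" using ts2 zero_less_mult_iff by (metis not_less_iff_gr_or_eq)
    then show ?thesis unfolding prod using n2 by simp
  qed
  show "(t - s) * (r - s) < 0 \<Longrightarrow> deriv A t * A t < 0"
  proof -
    assume h: "(t - s) * (r - s) < 0"
    have "((Im w * (r - s)) * A t) * (t - s)^2 < 0" unfolding eq using q h by (simp add: mult_pos_neg)
    then have "(Im w * (r - s)) * A t < 0" using ts2 by (simp add: mult_less_0_iff)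
    then show ?thesis unfolding prod using n2 by (simp add: divide_neg_pos)
  qed
qed

lemma phi_eq:
  fixes c1 v1 c2 v2 :: complex and t1 t2 :: real
  assumes "v1 \<noteq> 0" and meet: "traj c1 v1 t1 = traj c2 v2 t2"
  shows "phi_obs (traj c1 v1) v1 (traj c2 v2) =
    (\<lambda>t. let a = Arg ((\<lambda>t::real. of_real t * (v2 / v1 - 1) + (of_real t1 - of_real t2 * (v2 / v1))) t)
         in if a = pi then - pi else a)"
proof
  fix u
  have c: "c2 = c1 + of_real t1 * v1 - of_real t2 * v2" using meet by (simp add: traj_def algebra_simps)
  have "(traj c2 v2 u - traj c1 v1 u) / v1 = of_real u * (v2 / v1 - 1) + (of_real t1 - of_real t2 * (v2 / v1))"
    using assms(1) unfolding c traj_def by (simp add: field_simps)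
  then show "phi_obs (traj c1 v1) v1 (traj c2 v2) u = (let a = Arg ((\<lambda>t::real. of_real t * (v2 / v1 - 1) + (of_real t1 - of_real t2 * (v2 / v1))) u)
         in if a = pi then - pi else a)"
    by (simp add: phi_obs_def azimuth_def)
qed

lemma Im_ratio:
  fixes v1 v2 :: complex
  assumes "v1 \<noteq> 0" "\<not> (\<exists>r::real. v2 = of_real r * v1)"
  shows "Im (v2 / v1) \<noteq> 0"
proof
  assume "Im (v2 / v1) = 0"
  then have "v2 / v1 = of_real (Re (v2 / v1))" by (simp add: complex_eq_iff)
  then have "v2 = of_real (Re (v2 / v1)) * v1" using assms(1) by (simp add: field_simps)
  then show False using assms(2) by blast
qed

theorem theorem3:
  fixes c1 v1 c2 v2 :: complex and t1 t2 :: real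
  assumes "v1 \<noteq> 0" and "v2 \<noteq> 0"
    and not_parallel: "\<not> (\<exists>r::real. v2 = of_real r * v1)"
    and meet: "traj c1 v1 t1 = traj c2 v2 t2"
    and "t1 > t2"
  shows "(\<forall>t. t < t2 \<longrightarrow> regressive (phi_obs (traj c1 v1) v1 (traj c2 v2)) t)
       \<and> (\<forall>t. t > t2 \<longrightarrow> progressive (phi_obs (traj c1 v1) v1 (traj c2 v2)) t)
       \<and> (\<forall>t. t < t1 \<longrightarrow> progressive (phi_obs (traj c2 v2) v2 (traj c1 v1)) t)
       \<and> (\<forall>t. t > t1 \<longrightarrow> regressive (phi_obs (traj c2 v2) v2 (traj c1 v1)) t)"
proof -
  have np2: "\<not> (\<exists>r::real. v1 = of_real r * v2)"
  proof
    assume "\<exists>r::real. v1 = of_real r * v2"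
    then obtain r where r: "v1 = of_real r * v2" by blast
    then have "r \<noteq> 0" using assms(1) by auto
    then have "v2 = of_real (1 / r) * v1" using r by (simp add: field_simps)
    then show False using not_parallel by blast
  qed
  have b1: "Im (v2 / v1) \<noteq> 0" using Im_ratio[OF assms(1) not_parallel] .
  have b2: "Im (v1 / v2) \<noteq> 0" using Im_ratio[OF assms(2) np2] .
  note E1 = phi_eq[OF assms(1) meet]
  note E2 = phi_eq[OF assms(2) meet[symmetric]]
  have 1: "regressive (phi_obs (traj c1 v1) v1 (traj c2 v2)) t" if "t < t2" for t
  proof -
    have ts: "t \<noteq> t2" and n: "(t - t2) * (t1 - t2) < 0" using that \<open>t1 > t2\<close> by (auto simp: mult_neg_pos)
    show ?thesis unfolding regressive_def E1
      using key(1)[OF b1 ts, of t1] key(3)[OF b1 ts n] by simp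
  qed
  have 2: "progressive (phi_obs (traj c1 v1) v1 (traj c2 v2)) t" if "t > t2" for t
  proof -
    have ts: "t \<noteq> t2" and n: "(t - t2) * (t1 - t2) > 0" using that \<open>t1 > t2\<close> by auto
    show ?thesis unfolding progressive_def E1
      using key(1)[OF b1 ts, of t1] key(2)[OF b1 ts n] by (simp add: mult.commute)
  qed
  have 3: "progressive (phi_obs (traj c2 v2) v2 (traj c1 v1)) t" if "t < t1" for t
  proof -
    have ts: "t \<noteq> t1" and n: "(t - t1) * (t2 - t1) > 0" using that \<open>t1 > t2\<close> by (auto simp: mult_neg_neg)
    show ?thesis unfolding progressive_def E2
      using key(1)[OF b2 ts, of t2] key(2)[OF b2 ts n] by (simp add: mult.commute)
  qed
  have 4: "regressive (phi_obs (traj c2 v2) v2 (traj c1 v1)) t" if "t > t1" for t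
  proof -
    have ts: "t \<noteq> t1" and n: "(t - t1) * (t2 - t1) < 0" using that \<open>t1 > t2\<close> by (auto simp: mult_pos_neg)
    show ?thesis unfolding regressive_def E2
      using key(1)[OF b2 ts, of t2] key(3)[OF b2 ts n] by simp
  qed
  show ?thesis using 1 2 3 4 by blast
qed
end
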